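(* Let $T$ be a rooted binary phylogenetic $X$-tree with strictly positive edge lengths $\lambda_T(e)$ such that the ranking $\pi_T$ is strict and reversible with respect to some $X'\subset X$. Let $k,d>0$. If all edge lengths are multiplied by $k$ and then $d$ is added to the length of every pendant edge, the resulting edge lengths again give a strict ranking that is reversible with respect to $X'$.
   Context: A rooted binary phylogenetic $X$-tree ($X$ finite) is a rooted tree whose root $\rho$ has in-degree 0 and out-degree 2, all edges directed away from $\rho$, all other interior vertices have in-degree 1 and out-degree 2, and whose leaves are bijectively labelled by $X$. Edges incident to leaves are pendant edges. Every edge $e$ has a strictly positive length $\lambda_e$. The Fair Proportion index of $x\in X$ is $FP_T(x)=\sum_{e\in P(T;\rho,x)}\lambda_e/D_e$, where $P(T;\rho,x)$ is the path from $\rho$ to $x$ and $D_e$ is the number of leaves descended from $e$. For $Y\subseteq X$, the induced subtree $T_Y$ is obtained from the minimal subtree of $T$ connecting $Y$ by suppressing all non-root vertices of in- and out-degree 1, adding the lengths of merged edges; if the root then has out-degree 1, it and its incident edge are deleted. The ranking $\pi_T$ is strict if all values $FP_T(x)$ are pairwise distinct. For $X'\subset X$, $\widetilde X=X\setminus X'$ and $\widetilde T=T_{\widetilde X}$, a strict ranking $\pi_T$ is reversible with respect to $X'$ if for all distinct $x_i,x_j\in\widetilde X$, $FP_T(x_i)>FP_T(x_j)$ implies $FP_{\widetilde T}(x_i)<FP_{\widetilde T}(x_j)$. *)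

theory Defs
  imports Main "HOL.Real"
begin

text \<open>Every vertex carries the
  length of its incoming edge (the real number). The value stored at the root
  has no meaning (the root has no incoming edge) and is ignored everywhere.\<close>
datatype 'a etree = Leaf real 'a | Node real "'a etree" "'a etree"

fun inlen :: "'a etree \<Rightarrow> real" where
  "inlen (Leaf l _) = l"
| "inlen (Node l _ _) = l"

fun leaf_list :: "'a etree \<Rightarrow> 'a list" where
  "leaf_list (Leaf _ x) = [x]"
| "leaf_list (Node _ a b) = leaf_list a @ leaf_list b"

fun pos_below :: "'a etree \<Rightarrow> bool" where
  "pos_below (Leaf _ _) = True"
| "pos_below (Node _ a b) = (inlen a > 0 \<and> inlen b > 0 \<and> pos_below a \<and> pos_below b)"

definition phylo_tree :: "'a set \<Rightarrow> 'a etree \<Rightarrow> bool" where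
  "phylo_tree X t \<longleftrightarrow> (\<exists>l a b. t = Node l a b) \<and> distinct (leaf_list t)
     \<and> set (leaf_list t) = X \<and> pos_below t"

fun path_sum :: "'a etree \<Rightarrow> 'a \<Rightarrow> real" where
  "path_sum (Leaf l y) x = (if y = x then l else 0)"
| "path_sum (Node l a b) x =
     (if x \<in> set (leaf_list (Node l a b)) then l / real (length (leaf_list (Node l a b))) else 0)
     + path_sum a x + path_sum b x"

fun FP :: "'a etree \<Rightarrow> 'a \<Rightarrow> real" where
  "FP (Leaf _ _) x = 0"
| "FP (Node _ a b) x = path_sum a x + path_sum b x"

fun add_len :: "real \<Rightarrow> 'a etree \<Rightarrow> 'a etree" where
  "add_len c (Leaf l x) = Leaf (l + c) x"
| "add_len c (Node l a b) = Node (l + c) a b"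

text \<open>Restriction to Y: minimal connecting subtree, suppressing degree-1 vertices
  (merging edge lengths); if the root gets out-degree 1 the surviving child becomes
  the root (its incoming length then being ignored, i.e. the root edge is deleted).\<close>
fun restr :: "'a set \<Rightarrow> 'a etree \<Rightarrow> 'a etree option" where
  "restr Y (Leaf l x) = (if x \<in> Y then Some (Leaf l x) else None)"
| "restr Y (Node l a b) =
     (case (restr Y a, restr Y b) of
        (Some a', Some b') \<Rightarrow> Some (Node l a' b')
      | (Some a', None) \<Rightarrow> Some (add_len l a')
      | (None, Some b') \<Rightarrow> Some (add_len l b')
      | (None, None) \<Rightarrow> None)"

definition induced :: "'a etree \<Rightarrow> 'a set \<Rightarrow> 'a etree" where
  "induced t Y = the (restr Y t)"

definition strict_ranking :: "'a set \<Rightarrow> 'a etree \<Rightarrow> bool" where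
  "strict_ranking X t \<longleftrightarrow> inj_on (FP t) X"

definition reversible :: "'a set \<Rightarrow> 'a set \<Rightarrow> 'a etree \<Rightarrow> bool" where
  "reversible X X' t \<longleftrightarrow> strict_ranking X t \<and>
     (\<forall>xi \<in> X - X'. \<forall>xj \<in> X - X'. xi \<noteq> xj \<longrightarrow>
        FP t xi > FP t xj \<longrightarrow> FP (induced t (X - X')) xi < FP (induced t (X - X')) xj)"

fun rescale :: "real \<Rightarrow> real \<Rightarrow> 'a etree \<Rightarrow> 'a etree" where
  "rescale k d (Leaf l x) = Leaf (k * l + d) x"
| "rescale k d (Node l a b) = Node (k * l) (rescale k d a) (rescale k d b)"

end

theory Submission
  imports Defs
begin

lemma count_distinct: "distinct xs \<Longrightarrow> x \<in> set xs \<Longrightarrow> count_list xs x = 1"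
  by (induction xs) auto

lemma leaf_rescale[simp]: "leaf_list (rescale k d t) = leaf_list t"
  by (induction t) auto

lemma path_sum_rescale:
  "path_sum (rescale k d t) x = k * path_sum t x + d * count_list (leaf_list t) x"
  by (induction t) (auto simp: algebra_simps)

lemma FP_rescale_Node:
  "t = Node l a b \<Longrightarrow> FP (rescale k d t) x = k * FP t x + d * count_list (leaf_list t) x"
  by (simp add: path_sum_rescale algebra_simps)

lemma add_len_rescale: "add_len (k*l) (rescale k d t) = rescale k d (add_len l t)"
  by (cases t) (auto simp: algebra_simps)

lemma leaf_add_len[simp]: "leaf_list (add_len l t) = leaf_list t"
  by (cases t) auto

lemma restr_rescale: "restr Y (rescale k d t) = map_option (rescale k d) (restr Y t)"
  by (induction t) (auto split: option.splits simp: add_len_rescale)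

lemma restr_None: "restr Y t = None \<longleftrightarrow> Y \<inter> set (leaf_list t) = {}"
  by (induction t) (auto split: option.splits)

lemma restr_Some: "restr Y t = Some t' \<Longrightarrow> leaf_list t' = filter (\<lambda>x. x \<in> Y) (leaf_list t)"
  by (induction t arbitrary: t') (auto split: option.splits simp: restr_None filter_empty_conv)

theorem corollary2:
  fixes X X' :: "'a set" and T :: "'a etree" and k d :: real
  assumes "phylo_tree X T" and "X' \<subset> X"
    and "reversible X X' T"
    and "k > 0" and "d > 0"
  shows "strict_ranking X (rescale k d T) \<and> reversible X X' (rescale k d T)"
proof -
  from assms(1) obtain l a b where Tn: "T = Node l a b" and dT: "distinct (leaf_list T)"
    and sT: "set (leaf_list T) = X" unfolding phylo_tree_def by auto
  have FPr: "FP (rescale k d T) x = k * FP T x + d" if "x \<in> X" for x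
    using FP_rescale_Node[OF Tn] count_distinct[OF dT] that sT by simp
  have inj: "inj_on (FP T) X" using assms(3) unfolding reversible_def strict_ranking_def by simp
  have sr: "strict_ranking X (rescale k d T)"
    unfolding strict_ranking_def
  proof (rule inj_onI)
    fix x y assume "x \<in> X" "y \<in> X" "FP (rescale k d T) x = FP (rescale k d T) y"
    then have "FP T x = FP T y" using FPr assms(4) by simp
    then show "x = y" using inj \<open>x \<in> X\<close> \<open>y \<in> X\<close> inj_on_def by metis
  qed
  define Y where "Y = X - X'"
  have "Y \<inter> set (leaf_list T) \<noteq> {}" using assms(2) sT Y_def by auto
  then obtain T' where rT: "restr Y T = Some T'" using restr_None[of Y T] by (cases "restr Y T") auto
  have iT: "induced T Y = T'" using rT by (simp add: induced_def)
  have iTr: "induced (rescale k d T) Y = rescale k d T'" using rT by (simp add: induced_def restr_rescale)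
  have lT': "leaf_list T' = filter (\<lambda>x. x \<in> Y) (leaf_list T)" using restr_Some[OF rT] .
  have dT': "distinct (leaf_list T')" using lT' dT by simp
  have sT': "set (leaf_list T') = Y" using lT' sT Y_def by auto
  have rev: "\<forall>xi \<in> Y. \<forall>xj \<in> Y. xi \<noteq> xj \<longrightarrow> FP T xi > FP T xj \<longrightarrow> FP T' xi < FP T' xj"
    using assms(3) unfolding reversible_def Y_def[symmetric] iT by blast
  have "\<forall>xi \<in> Y. \<forall>xj \<in> Y. xi \<noteq> xj \<longrightarrow> FP (rescale k d T) xi > FP (rescale k d T) xj
      \<longrightarrow> FP (rescale k d T') xi < FP (rescale k d T') xj"
  proof (intro ballI impI)
    fix xi xj assume h: "xi \<in> Y" "xj \<in> Y" "xi \<noteq> xj" "FP (rescale k d T) xi > FP (rescale k d T) xj"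
    have "xi \<in> X" "xj \<in> X" using h Y_def by auto
    then have g: "FP T xi > FP T xj" using h(4) FPr assms(4)
      by (smt (verit) mult_le_cancel_left_pos)
    have lt: "FP T' xi < FP T' xj" using rev h(1-3) g by blast
    show "FP (rescale k d T') xi < FP (rescale k d T') xj"
    proof (cases T')
      case (Leaf l' y)
      then show ?thesis using lt by simp
    next
      case (Node l' a' b')
      have c: "count_list (leaf_list T') x = 1" if "x \<in> Y" for x
        using count_distinct[OF dT'] sT' that by simp
      have e: "FP (rescale k d T') x = k * FP T' x + d" if "x \<in> Y" for x
        using FP_rescale_Node[OF Node, of k d x] c[OF that] by simp
      show ?thesis unfolding e[OF h(1)] e[OF h(2)] using lt assms(4) by simp
    qed
  qed
  then show ?thesis using sr unfolding reversible_def Y_def[symmetric] iTr by blast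
qed

end
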